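(* Let $n$ be an integer and $\mathbb F$ a field whose characteristic does not divide $2n$. Then the polynomial $S_{n-1}$ is separable over $\mathbb F$, and $(\Delta_n,S_{n-1})=(1)$ in $\mathbb F[\omega]$, where $\Delta_n=S_n'S_{n-1}-S_nS_{n-1}'$.
   Context: The Chebyshev polynomials $S_j(\omega)\in\mathbb Z[\omega]$ are defined for all integers $j$ by $S_0=1$, $S_1=\omega$, $S_{j+1}=\omega S_j-S_{j-1}$, and are considered over $\mathbb F$ by reduction; primes denote derivatives with respect to $\omega$. *)

theory Defs
  imports "HOL-Computational_Algebra.Polynomial"
begin

(* cheb_U k = S_{k-1}: U_0 = 0, U_1 = 1, U_{k+2} = omega U_{k+1} - U_k *)
fun cheb_U :: "nat \<Rightarrow> 'a::comm_ring_1 poly" where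
  "cheb_U 0 = 0"
| "cheb_U (Suc 0) = 1"
| "cheb_U (Suc (Suc k)) = [:0, 1:] * cheb_U (Suc k) - cheb_U k"

(* Chebyshev polynomials S_j for all integers j:
   S_0 = 1, S_1 = omega, S_{j+1} = omega S_j - S_{j-1}  (for all j in Z).
   For j >= -1, S_j = U_{j+1}; for j <= -1, S_j = - S_{-j-2} = - U_{-j-1}. *)
definition cheb_S :: "int \<Rightarrow> 'a::comm_ring_1 poly" where
  "cheb_S j = (if j \<ge> -1 then cheb_U (nat (j + 1)) else - cheb_U (nat (- j - 1)))"

definition separable :: "'a::field poly \<Rightarrow> bool" where
  "separable p \<longleftrightarrow> coprime p (pderiv p)"

definition cheb_Delta :: "int \<Rightarrow> 'a::idom poly" where
  "cheb_Delta n = pderiv (cheb_S n) * cheb_S (n - 1) - cheb_S n * pderiv (cheb_S (n - 1))"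

end

theory Submission
  imports Defs "HOL-Computational_Algebra.Computational_Algebra"
begin

lemma U_rec: "x = [:0,1:] \<Longrightarrow> cheb_U (Suc (Suc k)) = x * cheb_U (Suc k) - cheb_U k"
  by simp

lemma cassini:
  assumes "x = [:0,1:]"
  shows "(cheb_U (Suc m) :: 'a::comm_ring_1 poly)^2 - x * cheb_U (Suc m) * cheb_U m + (cheb_U m)^2 = 1"
proof (induction m)
  case 0 then show ?case by simp
next
  case (Suc m)
  have r: "cheb_U (Suc (Suc m)) = x * cheb_U (Suc m) - (cheb_U m :: 'a poly)" using U_rec[OF assms] .
  show ?case using Suc.IH unfolding r by (simp add: algebra_simps power2_eq_square)
qed

lemma deriv_id:
  assumes xd: "x = [:0,1:]"
  shows "(x^2 - 4) * pderiv (cheb_U m :: 'a::idom poly)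
     = of_nat m * (2 * cheb_U (Suc m) - x * cheb_U m) - x * cheb_U m
   \<and> (x^2 - 4) * pderiv (cheb_U (Suc m) :: 'a::idom poly)
     = of_nat (Suc m) * (2 * cheb_U (Suc (Suc m)) - x * cheb_U (Suc m)) - x * cheb_U (Suc m)"
proof (induction m)
  case 0 then show ?case using xd by (simp add: pderiv_pCons algebra_simps power2_eq_square numeral_poly)
next
  case (Suc m)
  have px: "pderiv x = 1" by (simp add: xd pderiv_pCons)
  have r: "\<And>k. cheb_U (Suc (Suc k)) = x * cheb_U (Suc k) - (cheb_U k :: 'a poly)" using U_rec[OF xd] .
  have d: "pderiv (cheb_U (Suc (Suc m)) :: 'a poly) = cheb_U (Suc m) + x * pderiv (cheb_U (Suc m)) - pderiv (cheb_U m)"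
    unfolding r by (simp add: pderiv_diff pderiv_mult px)
  have IH1: "(x^2 - 4) * pderiv (cheb_U m :: 'a poly) = of_nat m * (2 * cheb_U (Suc m) - x * cheb_U m) - x * cheb_U m"
    using Suc.IH by blast
  have IH2: "(x^2 - 4) * pderiv (cheb_U (Suc m) :: 'a poly) = (of_nat m + 1) * (2 * (x * cheb_U (Suc m) - cheb_U m) - x * cheb_U (Suc m)) - x * cheb_U (Suc m)"
    using Suc.IH unfolding r by simp
  have "(x^2 - 4) * pderiv (cheb_U (Suc (Suc m)) :: 'a poly)
      = (of_nat m + 2) * (2 * (x * (x * cheb_U (Suc m) - cheb_U m) - cheb_U (Suc m)) - x * (x * cheb_U (Suc m) - cheb_U m)) - x * (x * cheb_U (Suc m) - cheb_U m)"
  proof -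
    have "(x^2 - 4) * pderiv (cheb_U (Suc (Suc m)) :: 'a poly)
      = (x^2 - 4) * cheb_U (Suc m) + x * ((x^2 - 4) * pderiv (cheb_U (Suc m))) - (x^2 - 4) * pderiv (cheb_U m)"
      unfolding d by (simp add: algebra_simps)
    also have "\<dots> = (x^2 - 4) * cheb_U (Suc m) + x * ((of_nat m + 1) * (2 * (x * cheb_U (Suc m) - cheb_U m) - x * cheb_U (Suc m)) - x * cheb_U (Suc m))
       - (of_nat m * (2 * cheb_U (Suc m) - x * cheb_U m) - x * cheb_U m)"
      unfolding IH1 IH2 ..
    also have "\<dots> = (of_nat m + 2) * (2 * (x * (x * cheb_U (Suc m) - cheb_U m) - cheb_U (Suc m)) - x * (x * cheb_U (Suc m) - cheb_U m)) - x * (x * cheb_U (Suc m) - cheb_U m)"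
      by (simp add: algebra_simps power2_eq_square)
    finally show ?thesis .
  qed
  then show ?case using IH2 unfolding r by (simp add: algebra_simps)
qed

definition bez :: "'a::comm_ring_1 \<Rightarrow> 'a \<Rightarrow> bool" where
  "bez a b \<longleftrightarrow> (\<exists>u v. u * a + v * b = 1)"

lemma bez_coprime: "bez a (b::'a::field poly) \<Longrightarrow> coprime a b"
  unfolding bez_def
proof (elim exE, intro coprimeI)
  fix u v c assume "u * a + v * b = 1" "c dvd a" "c dvd b"
  then have "c dvd u * a + v * b" by (intro dvd_add) auto
  then show "is_unit c" using \<open>u * a + v * b = 1\<close> by simp
qed

lemma bez_mult: assumes "bez U P" "bez U Q" shows "bez U (P * Q)"
proof -
  obtain a b where ab: "a * U + b * P = 1" using assms(1) bez_def by blast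
  obtain c d where cd: "c * U + d * Q = 1" using assms(2) bez_def by blast
  have "(b * P) * (d * Q) = (1 - a * U) * (1 - c * U)" using ab cd by (metis add_diff_cancel_left')
  then have "(a + c - a * c * U) * U + (b * d) * (P * Q) = 1" by (simp add: algebra_simps)
  then show ?thesis unfolding bez_def by blast
qed

lemma U_bez_Suc: "bez (cheb_U m :: 'a::comm_ring_1 poly) (cheb_U (Suc m))"
proof -
  define x :: "'a poly" where "x = [:0,1:]"
  have "(cheb_U m) * cheb_U m + (cheb_U (Suc m) - x * cheb_U m) * cheb_U (Suc m) = 1"
    using cassini[OF x_def, of m] by (simp add: algebra_simps power2_eq_square)
  then show ?thesis unfolding bez_def by blast
qed

lemma U_sep:
  assumes nz: "(of_nat (2*m) :: 'a::field) \<noteq> 0"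
  shows "bez (cheb_U m :: 'a poly) (pderiv (cheb_U m))"
proof -
  define x :: "'a poly" where "x = [:0,1:]"
  define W where "W = cheb_U (Suc m) - x * cheb_U m"
  define k :: "'a poly" where "k = [:of_nat (2*m):]"
  have e1: "k * cheb_U (Suc m) = (x^2 - 4) * pderiv (cheb_U m :: 'a poly) + (of_nat m + 1) * x * cheb_U m"
    using conjunct1[OF deriv_id[OF x_def, of m]] by (simp add: k_def algebra_simps of_nat_poly numeral_poly)
  have e2: "W * cheb_U (Suc m) + cheb_U m * cheb_U m = 1"
    using cassini[OF x_def, of m] by (simp add: W_def algebra_simps power2_eq_square)
  have "k = k * (W * cheb_U (Suc m) + cheb_U m * cheb_U m)" using e2 by simp
  also have "\<dots> = W * (k * cheb_U (Suc m)) + k * cheb_U m * cheb_U m" by (simp add: algebra_simps)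
  also have "\<dots> = ((of_nat m + 1) * x * W + k * cheb_U m) * cheb_U m + ((x^2 - 4) * W) * pderiv (cheb_U m)"
    unfolding e1 by (simp add: algebra_simps)
  finally have e3: "k = ((of_nat m + 1) * x * W + k * cheb_U m) * cheb_U m + ((x^2 - 4) * W) * pderiv (cheb_U m)" .
  define ki :: "'a poly" where "ki = [:inverse (of_nat (2*m)):]"
  have "ki * k = 1" using nz by (simp add: ki_def k_def)
  then have "(ki * ((of_nat m + 1) * x * W + k * cheb_U m)) * cheb_U m + (ki * ((x^2 - 4) * W)) * pderiv (cheb_U m) = 1"
    using e3 by (metis (no_types, lifting) distrib_left mult.assoc)
  then show ?thesis unfolding bez_def by blast
qed

lemma fin:
  fixes U D A R :: "'a::field poly"
  assumes "bez U (pderiv U)" "bez U R" "D = A * U + (-1) * (R * pderiv U)"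
  shows "\<exists>a b. a * D + b * U = 1"
proof -
  have "bez U (R * pderiv U)" using assms(1,2) bez_mult by (metis mult.commute)
  then obtain u v where uv: "u * U + v * (R * pderiv U) = 1" unfolding bez_def by blast
  have e: "R * pderiv U = A * U - D" using assms(3) by simp
  have "(- v) * D + (u + v * A) * U = u * U + v * (A * U - D)" by (simp add: algebra_simps)
  then have "(- v) * D + (u + v * A) * U = u * U + v * (R * pderiv U)" by (simp only: e)
  then have "(- v) * D + (u + v * A) * U = 1" using uv by simp
  then show ?thesis by blast
qed

theorem lemma5p5:
  fixes n :: int
  assumes "\<not> int CHAR('a::field) dvd 2 * n"
  shows "separable (cheb_S (n - 1) :: 'a poly)
    \<and> (\<exists>a b :: 'a poly. a * cheb_Delta n + b * cheb_S (n - 1) = 1)"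
proof -
  have nz: "(of_int (2 * n) :: 'a) \<noteq> 0" using assms by (metis of_int_eq_0_iff_char_dvd)
  have n0: "n \<noteq> 0" using assms by auto
  show ?thesis
  proof (cases "n > 0")
    case True
    define m where "m = nat n"
    have "(of_nat (2*m) :: 'a) = of_int (2*n)" using True by (simp add: m_def)
    then have sep: "bez (cheb_U m :: 'a poly) (pderiv (cheb_U m))" using nz U_sep by metis
    have S1: "cheb_S (n - 1) = (cheb_U m :: 'a poly)" using True by (simp add: cheb_S_def m_def)
    have S2: "cheb_S n = (cheb_U (Suc m) :: 'a poly)" using True by (simp add: cheb_S_def m_def Suc_nat_eq_nat_zadd1 add.commute)
    have D: "cheb_Delta n = pderiv (cheb_U (Suc m)) * cheb_U m + (-1) * (cheb_U (Suc m) * pderiv (cheb_U m) :: 'a poly)"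
      unfolding cheb_Delta_def S1 S2 by simp
    have "\<exists>a b :: 'a poly. a * cheb_Delta n + b * cheb_S (n - 1) = 1"
      unfolding S1 by (rule fin[OF sep _ D]) (auto simp: U_bez_Suc)
    then show ?thesis using bez_coprime[OF sep] S1 by (simp add: separable_def)
  next
    case False
    define m where "m = nat (- n)"
    have mpos: "m > 0" using False n0 by (simp add: m_def)
    then obtain k where k: "m = Suc k" using gr0_implies_Suc by blast
    have "(of_nat (2*m) :: 'a) = - of_int (2*n)" using False by (simp add: m_def)
    then have "(of_nat (2*m) :: 'a) \<noteq> 0" using nz by simp
    then have sep: "bez (cheb_U m :: 'a poly) (pderiv (cheb_U m))" using U_sep by metis
    have S1: "cheb_S (n - 1) = - (cheb_U m :: 'a poly)" using False n0 by (simp add: cheb_S_def m_def)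
    have S2: "cheb_S n = - (cheb_U k :: 'a poly)"
    proof (cases "n = -1")
      case True then show ?thesis using k by (simp add: cheb_S_def m_def)
    next
      case F2: False
      then have "nat (- n - 1) = k" using k False by (simp add: m_def)
      moreover have "\<not> n \<ge> -1" using F2 False n0 by simp
      ultimately show ?thesis by (simp add: cheb_S_def)
    qed
    have D: "cheb_Delta n = pderiv (cheb_U k) * cheb_U m + (-1) * (cheb_U k * pderiv (cheb_U m) :: 'a poly)"
      unfolding cheb_Delta_def S1 S2 by (simp add: pderiv_minus)
    have "\<exists>a b :: 'a poly. a * cheb_Delta n + b * cheb_U m = 1"
      by (rule fin[OF sep _ D]) (metis k U_bez_Suc bez_def add.commute)
    then obtain a b :: "'a poly" where "a * cheb_Delta n + b * cheb_U m = 1" by blast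
    then have "a * cheb_Delta n + (- b) * cheb_S (n - 1) = 1" using S1 by simp
    moreover have "separable (cheb_S (n - 1) :: 'a poly)" proof -
      obtain u v where "u * cheb_U m + v * pderiv (cheb_U m) = (1 :: 'a poly)" using sep bez_def by blast
      then have "(-u) * (- cheb_U m) + (-v) * pderiv (- cheb_U m) = (1 :: 'a poly)" by (simp add: pderiv_minus)
      then have "bez (- cheb_U m) (pderiv (- cheb_U m) :: 'a poly)" unfolding bez_def by blast
      then show ?thesis using bez_coprime S1 by (simp add: separable_def)
    qed
    ultimately show ?thesis by blast
  qed
qed

end
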